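(* Given a c.e. transitive relation $\prec$ on $\omega$ and a c.e. sequence $(A_i)_{i\in\omega}$ of co-c.e. closed subsets of $\mathcal{I}(\prec)$, one can compute a c.e. transitive relation $\sqsubset$ on $\omega$ such that $\mathcal{I}(\sqsubset)$ is computably homeomorphic to the space obtained by adding each $A_i$ ($i\in\omega$) as a c.e. open set to the topology of $\mathcal{I}(\prec)$.
   Context: For a transitive relation $\prec$ on $\omega$, an ideal is a non-empty set $I\subseteq\omega$ which is a lower set and directed with respect to $\prec$; $\mathcal{I}(\prec)$ is the space of ideals with topology generated by $[n]_\prec=\{I\mid n\in I\}$, numbered by $n$. A c.e. sequence of co-c.e. closed sets means there is a uniformly c.e. family $(W_i)$ of subsets of $\omega$ with $\mathcal{I}(\prec)\setminus A_i=\bigcup_{n\in W_i}[n]_\prec$. Adding the $A_i$ as c.e. open sets means the topology generated by all $[n]_\prec$ and all $A_i$, with effective base consisting of the finite intersections of these sets (suitably numbered). A computable homeomorphism is a homeomorphism such that preimages of basic open sets under it and its inverse are uniformly c.e. unions of basic open sets. *)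

theory Defs
  imports "HOL-Analysis.Analysis" "HOL-Library.Nat_Bijection"
begin

definition proj :: "nat \<Rightarrow> nat list \<Rightarrow> nat" where
  "proj i xs = (if i < length xs then xs ! i else 0)"

inductive PR :: "(nat list \<Rightarrow> nat) \<Rightarrow> bool" where
  PR_zero: "PR (\<lambda>_. 0)"
| PR_succ: "PR (\<lambda>xs. Suc (proj 0 xs))"
| PR_proj: "PR (proj i)"
| PR_comp: "PR g \<Longrightarrow> \<forall>f\<in>set fs. PR f \<Longrightarrow> PR (\<lambda>xs. g (map (\<lambda>f. f xs) fs))"
| PR_rec: "PR g \<Longrightarrow> PR h \<Longrightarrow>
     PR (\<lambda>xs. rec_nat (g (tl xs)) (\<lambda>n r. h (r # n # tl xs)) (proj 0 xs))"

text \<open>A predicate on k-tuples (lists of length k) is c.e. iff it is the projection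
  of a primitive recursive predicate (Kleene normal form).\<close>
definition ce_on :: "nat \<Rightarrow> (nat list \<Rightarrow> bool) \<Rightarrow> bool" where
  "ce_on k P \<longleftrightarrow> (\<exists>f. PR f \<and> (\<forall>xs. length xs = k \<longrightarrow> (P xs \<longleftrightarrow> (\<exists>y. f (y # xs) \<noteq> 0))))"

definition ce2 :: "(nat \<Rightarrow> nat \<Rightarrow> bool) \<Rightarrow> bool" where
  "ce2 R \<longleftrightarrow> ce_on 2 (\<lambda>xs. R (xs ! 0) (xs ! 1))"

definition ce3 :: "(nat \<Rightarrow> nat \<Rightarrow> nat \<Rightarrow> bool) \<Rightarrow> bool" where
  "ce3 R \<longleftrightarrow> ce_on 3 (\<lambda>xs. R (xs ! 0) (xs ! 1) (xs ! 2))"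

definition is_ideal :: "(nat \<Rightarrow> nat \<Rightarrow> bool) \<Rightarrow> nat set \<Rightarrow> bool" where
  "is_ideal R I \<longleftrightarrow> I \<noteq> {} \<and> (\<forall>n\<in>I. \<forall>m. R m n \<longrightarrow> m \<in> I)
     \<and> (\<forall>a\<in>I. \<forall>b\<in>I. \<exists>c\<in>I. R a c \<and> R b c)"

definition Ideals :: "(nat \<Rightarrow> nat \<Rightarrow> bool) \<Rightarrow> nat set set" where
  "Ideals R = {I. is_ideal R I}"

definition bopen :: "(nat \<Rightarrow> nat \<Rightarrow> bool) \<Rightarrow> nat \<Rightarrow> nat set set" where
  "bopen R n = {I \<in> Ideals R. n \<in> I}"

definition ideal_topology :: "(nat \<Rightarrow> nat \<Rightarrow> bool) \<Rightarrow> nat set topology" where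
  "ideal_topology R = topology_generated_by (range (bopen R))"

text \<open>Co-c.e. closed set A_i given by W: complement is the union of [n] with W i n.\<close>
definition coce_closed :: "(nat \<Rightarrow> nat \<Rightarrow> bool) \<Rightarrow> (nat \<Rightarrow> nat \<Rightarrow> bool) \<Rightarrow> nat \<Rightarrow> nat set set" where
  "coce_closed R W i = Ideals R - (\<Union>n\<in>{n. W i n}. bopen R n)"

text \<open>Subbasic sets of the extended space: code 2n is [n]_R, code 2i+1 is A_i.\<close>
definition subbasic :: "(nat \<Rightarrow> nat \<Rightarrow> bool) \<Rightarrow> (nat \<Rightarrow> nat \<Rightarrow> bool) \<Rightarrow> nat \<Rightarrow> nat set set" where
  "subbasic R W j = (if even j then bopen R (j div 2) else coce_closed R W (j div 2))"

text \<open>Basic sets of the extended space: finite intersections, indexed by the canonical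
  code k of the finite set set_decode k of subbasic codes (empty intersection = whole space).\<close>
definition ext_basic :: "(nat \<Rightarrow> nat \<Rightarrow> bool) \<Rightarrow> (nat \<Rightarrow> nat \<Rightarrow> bool) \<Rightarrow> nat \<Rightarrow> nat set set" where
  "ext_basic R W k = Ideals R \<inter> (\<Inter>j\<in>set_decode k. subbasic R W j)"

definition ext_topology :: "(nat \<Rightarrow> nat \<Rightarrow> bool) \<Rightarrow> (nat \<Rightarrow> nat \<Rightarrow> bool) \<Rightarrow> nat set topology" where
  "ext_topology R W = topology_generated_by (range (bopen R) \<union> range (coce_closed R W))"

definition computably_homeomorphic ::
  "(nat \<Rightarrow> nat \<Rightarrow> bool) \<Rightarrow> (nat \<Rightarrow> nat \<Rightarrow> bool) \<Rightarrow> (nat \<Rightarrow> nat \<Rightarrow> bool) \<Rightarrow> bool" where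
  "computably_homeomorphic R W S \<longleftrightarrow>
    (\<exists>f g V V'. homeomorphic_maps (ext_topology R W) (ideal_topology S) f g
       \<and> ce2 V \<and> ce2 V'
       \<and> (\<forall>m. {x \<in> topspace (ext_topology R W). f x \<in> bopen S m}
               = (\<Union>k\<in>{k. V m k}. ext_basic R W k))
       \<and> (\<forall>k. {y \<in> topspace (ideal_topology S). g y \<in> ext_basic R W k}
               = (\<Union>m\<in>{m. V' k m}. bopen S m)))"

end

theory Submission
  imports Defs
begin

lemma proj_Cons_0[simp]: "proj 0 (x # xs) = x" by (simp add: proj_def)
lemma proj_Cons_Suc[simp]: "proj (Suc i) (x # xs) = proj i xs" by (simp add: proj_def)
lemma proj_Cons_num[simp]: "proj (numeral k) (x # xs) = proj (pred_numeral k) xs"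
  by (simp add: numeral_eq_Suc)
lemma proj_Nil[simp]: "proj i [] = 0" by (simp add: proj_def)
lemma proj_tl: "proj i (tl xs) = proj (Suc i) xs" by (cases xs) simp_all

lemma PR_cong: "PR f \<Longrightarrow> (\<And>xs. f xs = g xs) \<Longrightarrow> PR g"
proof -
  assume "PR f" "\<And>xs. f xs = g xs"
  then have "f = g" by (intro ext) simp
  with \<open>PR f\<close> show ?thesis by simp
qed

definition depN :: "(nat list \<Rightarrow> nat) \<Rightarrow> nat \<Rightarrow> bool" where
  "depN f N \<longleftrightarrow> (\<forall>xs ys. (\<forall>i<N. proj i xs = proj i ys) \<longrightarrow> f xs = f ys)"

lemma depN_mono: "depN f N \<Longrightarrow> N \<le> M \<Longrightarrow> depN f M"
  unfolding depN_def by (meson less_le_trans)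

lemma depN_list: "\<forall>f\<in>set fs. \<exists>N. depN f N \<Longrightarrow> \<exists>N. \<forall>f\<in>set fs. depN f N"
proof (induction fs)
  case Nil then show ?case by simp
next
  case (Cons a fs)
  then obtain N where N: "\<forall>f\<in>set fs. depN f N" by auto
  from Cons.prems obtain M where M: "depN a M" by auto
  show ?case
    using N M depN_mono[of _ N "max N M"] depN_mono[of _ M "max N M"] by auto
qed

lemma PR_dep: "PR f \<Longrightarrow> \<exists>N. depN f N"
proof (induction rule: PR.induct)
  case PR_zero then show ?case by (auto simp: depN_def)
next
  case PR_succ show ?case by (rule exI[of _ 1]) (auto simp: depN_def)
next
  case (PR_proj i) show ?case by (rule exI[of _ "Suc i"]) (auto simp: depN_def)
next
  case (PR_comp g fs)
  have "\<forall>f\<in>set fs. \<exists>N. depN f N" using PR_comp.IH(2) by blast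
  then obtain N where N: "\<forall>f\<in>set fs. depN f N" using depN_list by blast
  have "depN (\<lambda>xs. g (map (\<lambda>f. f xs) fs)) N"
    unfolding depN_def
  proof (intro allI impI)
    fix xs ys :: "nat list" assume A: "\<forall>i<N. proj i xs = proj i ys"
    have *: "f xs = f ys" if "f \<in> set fs" for f using N that A unfolding depN_def by blast
    have "map (\<lambda>f. f xs) fs = map (\<lambda>f. f ys) fs" using * by (simp add: map_eq_conv)
    then show "g (map (\<lambda>f. f xs) fs) = g (map (\<lambda>f. f ys) fs)" by (rule arg_cong[where f=g])
  qed
  then show ?case by blast
next
  case (PR_rec g h)
  then obtain Ng Nh where Ng: "depN g Ng" and Nh: "depN h Nh" by auto
  have "depN (\<lambda>xs. rec_nat (g (tl xs)) (\<lambda>n r. h (r # n # tl xs)) (proj 0 xs)) (Suc (Ng + Nh))"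
    unfolding depN_def
  proof (intro allI impI)
    fix xs ys :: "nat list" assume A: "\<forall>i<Suc (Ng + Nh). proj i xs = proj i ys"
    have 1: "g (tl xs) = g (tl ys)"
      using Ng A unfolding depN_def by (auto simp: proj_tl)
    have 2: "h (r # n # tl xs) = h (r # n # tl ys)" for r n
    proof -
      have "\<forall>i<Nh. proj i (r # n # tl xs) = proj i (r # n # tl ys)"
      proof (intro allI impI)
        fix i assume "i < Nh"
        then show "proj i (r # n # tl xs) = proj i (r # n # tl ys)"
          using A by (cases i; cases "i - 1") (auto simp: proj_tl)
      qed
      then show ?thesis using Nh unfolding depN_def by blast
    qed
    have 3: "proj 0 xs = proj 0 ys" using A by auto
    show "rec_nat (g (tl xs)) (\<lambda>n r. h (r # n # tl xs)) (proj 0 xs) =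
          rec_nat (g (tl ys)) (\<lambda>n r. h (r # n # tl ys)) (proj 0 ys)"
      using 1 2 3 by simp
  qed
  then show ?case by blast
qed

lemma PR_gen_comp:
  assumes "PR f" "\<And>i. PR (H i)" "\<And>xs i. proj i (L xs) = H i xs"
  shows "PR (\<lambda>xs. f (L xs))"
proof -
  obtain N where N: "depN f N" using PR_dep[OF assms(1)] by auto
  have "PR (\<lambda>xs. f (map (\<lambda>h. h xs) (map H [0..<N])))"
    using assms(1,2) by (intro PR_comp) auto
  moreover have "f (map (\<lambda>h. h xs) (map H [0..<N])) = f (L xs)" for xs
  proof -
    have "\<forall>i<N. proj i (map (\<lambda>h. h xs) (map H [0..<N])) = proj i (L xs)"
      using assms(3) by (auto simp: proj_def)
    then show ?thesis using N unfolding depN_def by blast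
  qed
  ultimately show ?thesis by (rule PR_cong)
qed

lemma PR_tl: "PR f \<Longrightarrow> PR (\<lambda>xs. f (tl xs))"
  by (rule PR_gen_comp[where H="\<lambda>i. proj (Suc i)"]) (auto intro: PR_proj simp: proj_tl)

lemma PR_cons: "PR f \<Longrightarrow> PR b \<Longrightarrow> PR (\<lambda>xs. f (b xs # xs))"
  by (rule PR_gen_comp[where H="\<lambda>i. if i = 0 then b else proj (i - 1)"])
     (auto intro: PR_proj simp: proj_def nth_Cons')


lemma PR_const: "PR (\<lambda>_. c)"
proof (induction c)
  case 0 show ?case by (rule PR_zero)
next
  case (Suc c)
  have "PR (\<lambda>xs. Suc (proj 0 (map (\<lambda>f. f xs) [\<lambda>_. c])))"
    using PR_comp[OF PR_succ, of "[\<lambda>_. c]"] Suc by simp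
  then show ?case by (rule PR_cong) simp
qed

lemma PR_comp1: "PR h \<Longrightarrow> PR f \<Longrightarrow> PR (\<lambda>xs. h [f xs])"
  using PR_comp[of h "[f]"] by simp
lemma PR_comp2: "PR h \<Longrightarrow> PR f \<Longrightarrow> PR g \<Longrightarrow> PR (\<lambda>xs. h [f xs, g xs])"
  using PR_comp[of h "[f, g]"] by simp
lemma PR_comp3: "PR h \<Longrightarrow> PR f \<Longrightarrow> PR g \<Longrightarrow> PR k \<Longrightarrow> PR (\<lambda>xs. h [f xs, g xs, k xs])"
  using PR_comp[of h "[f, g, k]"] by simp
lemma PR_comp4: "PR h \<Longrightarrow> PR f \<Longrightarrow> PR g \<Longrightarrow> PR k \<Longrightarrow> PR l \<Longrightarrow> PR (\<lambda>xs. h [f xs, g xs, k xs, l xs])"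
  using PR_comp[of h "[f, g, k, l]"] by simp

lemma PR_rec': "PR g \<Longrightarrow> PR h \<Longrightarrow> (\<And>xs. rec_nat (g (tl xs)) (\<lambda>n r. h (r # n # tl xs)) (proj 0 xs) = F xs) \<Longrightarrow> PR F"
  using PR_rec PR_cong by blast

lemma rec_eqI: "F 0 = a \<Longrightarrow> (\<And>n. F (Suc n) = H n (F n)) \<Longrightarrow> rec_nat a H k = F k"
  by (induction k) auto

lemma PR_add: "PR f \<Longrightarrow> PR g \<Longrightarrow> PR (\<lambda>xs. f xs + g xs)"
proof -
  have b: "PR (\<lambda>xs. proj 0 xs + proj 1 xs)"
    by (rule PR_rec'[OF PR_proj PR_succ], rule rec_eqI[where F="\<lambda>k. k + proj 1 xs" for xs])
       (simp_all add: proj_tl)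
  assume "PR f" "PR g"
  from PR_comp2[OF b this] show ?thesis by simp
qed

lemma PR_sub: "PR f \<Longrightarrow> PR g \<Longrightarrow> PR (\<lambda>xs. f xs - g xs)"
proof -
  have p: "PR (\<lambda>xs. proj 0 xs - 1)"
    by (rule PR_rec'[OF PR_zero PR_proj[of 1]], rule rec_eqI[where F="\<lambda>k. k - 1"]) simp_all
  have b: "PR (\<lambda>xs. proj 1 xs - proj 0 xs)"
    by (rule PR_rec'[OF PR_proj[of 0] p], rule rec_eqI[where F="\<lambda>k. proj 1 xs - k" for xs])
       (simp_all add: proj_tl)
  assume "PR f" "PR g"
  from PR_comp2[OF b \<open>PR g\<close> \<open>PR f\<close>] show ?thesis by simp
qed

lemma PR_mult: "PR f \<Longrightarrow> PR g \<Longrightarrow> PR (\<lambda>xs. f xs * g xs)"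
proof -
  have h: "PR (\<lambda>xs. proj 0 xs + proj 2 xs)" by (intro PR_add PR_proj)
  have b: "PR (\<lambda>xs. proj 0 xs * proj 1 xs)"
    by (rule PR_rec'[OF PR_zero h], rule rec_eqI[where F="\<lambda>k. k * proj 1 xs" for xs])
       (simp_all add: proj_tl)
  assume "PR f" "PR g"
  from PR_comp2[OF b this] show ?thesis by simp
qed

lemma PR_Suc: "PR f \<Longrightarrow> PR (\<lambda>xs. Suc (f xs))"
  using PR_add[OF _ PR_const[of 1]] by simp

lemma PR_triangle: "PR f \<Longrightarrow> PR (\<lambda>xs. triangle (f xs))"
proof -
  have h: "PR (\<lambda>xs. proj 0 xs + Suc (proj 1 xs))" by (intro PR_add PR_Suc PR_proj)
  have b: "PR (\<lambda>xs. triangle (proj 0 xs))"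
    by (rule PR_rec'[OF PR_zero h], rule rec_eqI[where F="triangle"]) simp_all
  assume "PR f"
  from PR_comp1[OF b this] show ?thesis by simp
qed

lemma PR_pow2: "PR f \<Longrightarrow> PR (\<lambda>xs. 2 ^ (f xs))"
proof -
  have h: "PR (\<lambda>xs. proj 0 xs + proj 0 xs)" by (intro PR_add PR_proj)
  have b: "PR (\<lambda>xs. 2 ^ (proj 0 xs))"
    by (rule PR_rec'[OF PR_const[of 1] h], rule rec_eqI[where F="\<lambda>k. 2 ^ k"]) simp_all
  assume "PR f"
  from PR_comp1[OF b this] show ?thesis by simp
qed

lemma PR_mod2: "PR f \<Longrightarrow> PR (\<lambda>xs. f xs mod 2)"
proof -
  have h: "PR (\<lambda>xs. 1 - proj 0 xs)" by (intro PR_sub PR_const PR_proj)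
  have b: "PR (\<lambda>xs. proj 0 xs mod 2)"
    by (rule PR_rec'[OF PR_zero h], rule rec_eqI[where F="\<lambda>k. k mod 2"]) (simp_all add: mod_Suc)
  assume "PR f"
  from PR_comp1[OF b this] show ?thesis by simp
qed

lemma PR_bsum:
  assumes "PR (\<lambda>ys. F (proj 0 ys) (tl ys))" "PR b"
  shows "PR (\<lambda>xs. \<Sum>y<b xs. F y xs)"
proof -
  have h: "PR (\<lambda>zs. proj 0 zs + F (proj 0 (tl zs)) (tl (tl zs)))"
    by (intro PR_add PR_proj PR_tl[OF assms(1)])
  have S: "PR (\<lambda>ys. \<Sum>y<proj 0 ys. F y (tl ys))"
    by (rule PR_rec'[OF PR_zero h], rule rec_eqI[where F="\<lambda>k. \<Sum>y<k. F y (tl xs)" for xs]) simp_all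
  from PR_cons[OF S assms(2)] show ?thesis by simp
qed

definition PRP :: "(nat list \<Rightarrow> bool) \<Rightarrow> bool" where
  "PRP P \<longleftrightarrow> PR (\<lambda>xs. if P xs then 1 else 0)"

lemma PRP_eq: assumes "PR f" "PR g" shows "PRP (\<lambda>xs. f xs = g xs)"
proof -
  have "PR (\<lambda>xs. 1 - ((f xs - g xs) + (g xs - f xs)))"
    by (intro PR_sub PR_add PR_const assms)
  then show ?thesis unfolding PRP_def by (rule PR_cong) auto
qed

lemma PRP_less: assumes "PR f" "PR g" shows "PRP (\<lambda>xs. f xs < g xs)"
proof -
  have "PR (\<lambda>xs. 1 - (1 - (g xs - f xs)))"
    by (intro PR_sub PR_const assms)
  then show ?thesis unfolding PRP_def by (rule PR_cong) auto
qed

lemma PRP_le: "PR f \<Longrightarrow> PR g \<Longrightarrow> PRP (\<lambda>xs. f xs \<le> g xs)"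
  using PRP_less[OF _ PR_Suc] by (simp add: less_Suc_eq_le)

lemma PRP_and: assumes "PRP P" "PRP Q" shows "PRP (\<lambda>xs. P xs \<and> Q xs)"
proof -
  have "PR (\<lambda>xs. (if P xs then 1 else 0) * (if Q xs then 1 else 0))"
    using assms unfolding PRP_def by (intro PR_mult)
  then show ?thesis unfolding PRP_def by (rule PR_cong) auto
qed

lemma PRP_not: assumes "PRP P" shows "PRP (\<lambda>xs. \<not> P xs)"
proof -
  have "PR (\<lambda>xs. 1 - (if P xs then 1 else 0))"
    using assms unfolding PRP_def by (intro PR_sub PR_const)
  then show ?thesis unfolding PRP_def by (rule PR_cong) auto
qed

lemma PRP_or: "PRP P \<Longrightarrow> PRP Q \<Longrightarrow> PRP (\<lambda>xs. P xs \<or> Q xs)"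
  using PRP_not[OF PRP_and[OF PRP_not PRP_not]] by simp

lemma PRP_imp: "PRP P \<Longrightarrow> PRP Q \<Longrightarrow> PRP (\<lambda>xs. P xs \<longrightarrow> Q xs)"
  using PRP_or[OF PRP_not] by simp

lemma PRP_nz: "PR f \<Longrightarrow> PRP (\<lambda>xs. f xs \<noteq> 0)"
  using PRP_not[OF PRP_eq[OF _ PR_const[of 0]]] by simp

lemma PR_if: assumes "PRP P" "PR f" "PR g" shows "PR (\<lambda>xs. if P xs then f xs else g xs)"
proof -
  have "PR (\<lambda>xs. (if P xs then 1 else 0) * f xs + (1 - (if P xs then 1 else 0)) * g xs)"
    using assms unfolding PRP_def by (intro PR_add PR_mult PR_sub PR_const)
  then show ?thesis by (rule PR_cong) auto
qed

lemma PRP_bex: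
  assumes "PRP (\<lambda>ys. P (proj 0 ys) (tl ys))" "PR b"
  shows "PRP (\<lambda>xs. \<exists>y<b xs. P y xs)"
proof -
  have "PR (\<lambda>xs. \<Sum>y<b xs. (\<lambda>y xs. if P y xs then 1 else 0) y xs)"
    by (rule PR_bsum) (use assms in \<open>simp_all add: PRP_def\<close>)
  from PRP_nz[OF this] have "PRP (\<lambda>xs. (\<Sum>y<b xs. if P y xs then 1 else (0::nat)) \<noteq> 0)" by simp
  moreover have "((\<Sum>y<b xs. if P y xs then 1 else (0::nat)) \<noteq> 0) = (\<exists>y<b xs. P y xs)" for xs
    by (subst sum_nonneg_eq_0_iff) auto
  ultimately show ?thesis by simp
qed

lemma PRP_ball:
  assumes "PRP (\<lambda>ys. P (proj 0 ys) (tl ys))" "PR b"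
  shows "PRP (\<lambda>xs. \<forall>y<b xs. P y xs)"
  using PRP_not[OF PRP_bex[OF PRP_not[OF assms(1)] assms(2)]] by simp

lemma PR_proj_tl: "PR (\<lambda>xs. proj i (tl xs))"
  by (simp add: proj_tl PR_proj)

lemma PRP_const: "PRP (\<lambda>xs. c)"
  unfolding PRP_def by (cases c) (simp_all add: PR_const)


lemma PR_pe: "PR f \<Longrightarrow> PR g \<Longrightarrow> PR (\<lambda>xs. prod_encode (f xs, g xs))"
  unfolding prod_encode_def by (simp add: PR_add PR_triangle)

lemma pf_sum: "fst (prod_decode z) = (\<Sum>a<Suc z. if (\<exists>b<Suc z. prod_encode (a, b) = z) then a else 0)"
proof -
  obtain a0 b0 where d: "prod_decode z = (a0, b0)" by (cases "prod_decode z")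
  then have z: "z = prod_encode (a0, b0)" by (metis prod_decode_inverse)
  have le: "a0 \<le> z" "b0 \<le> z" using z le_prod_encode_1 le_prod_encode_2 by auto
  have c: "(\<exists>b<Suc z. prod_encode (a, b) = z) \<longleftrightarrow> a = a0" for a
    using z le by auto
  show ?thesis using le by (simp add: c d)
qed

lemma ps_sum: "snd (prod_decode z) = (\<Sum>b<Suc z. if (\<exists>a<Suc z. prod_encode (a, b) = z) then b else 0)"
proof -
  obtain a0 b0 where d: "prod_decode z = (a0, b0)" by (cases "prod_decode z")
  then have z: "z = prod_encode (a0, b0)" by (metis prod_decode_inverse)
  have le: "a0 \<le> z" "b0 \<le> z" using z le_prod_encode_1 le_prod_encode_2 by auto
  have c: "(\<exists>a<Suc z. prod_encode (a, b) = z) \<longleftrightarrow> b = b0" for b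
    using z le by auto
  show ?thesis using le by (simp add: c d)
qed

lemma PR_pf: assumes "PR f" shows "PR (\<lambda>xs. fst (prod_decode (f xs)))"
proof -
  have t1: "PR (\<lambda>xs. f (tl xs))" by (rule PR_tl[OF assms])
  have t2: "PR (\<lambda>xs. f (tl (tl xs)))" by (rule PR_tl[OF t1])
  have "PR (\<lambda>xs. \<Sum>a<Suc (f xs). if (\<exists>b<Suc (f xs). prod_encode (a, b) = f xs) then a else 0)"
    by (intro PR_bsum PR_if PRP_bex PRP_eq PR_pe PR_Suc PR_proj PR_proj_tl PR_const t1 t2 assms)
  then show ?thesis by (simp add: pf_sum)
qed

lemma PR_ps: assumes "PR f" shows "PR (\<lambda>xs. snd (prod_decode (f xs)))"
proof -
  have t1: "PR (\<lambda>xs. f (tl xs))" by (rule PR_tl[OF assms])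
  have t2: "PR (\<lambda>xs. f (tl (tl xs)))" by (rule PR_tl[OF t1])
  have "PR (\<lambda>xs. \<Sum>b<Suc (f xs). if (\<exists>a<Suc (f xs). prod_encode (a, b) = f xs) then b else 0)"
    by (intro PR_bsum PR_if PRP_bex PRP_eq PR_pe PR_Suc PR_proj PR_proj_tl PR_const t1 t2 assms)
  then show ?thesis by (simp add: ps_sum)
qed

lemma sum_ind_min: "(\<Sum>j<n. if j < m then 1 else (0::nat)) = min m n"
  by (induction n) (auto simp: min_def)

lemma div_sum: "(0::nat) < d \<Longrightarrow> n div d = (\<Sum>j<n. if Suc j * d \<le> n then 1 else 0)"
proof -
  assume d: "0 < d"
  have e: "Suc j * d \<le> n \<longleftrightarrow> j < n div d" for j
    using d by (metis Suc_le_eq less_eq_div_iff_mult_less_eq)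
  have le: "n div d \<le> n" by simp
  have "(\<Sum>j<n. if Suc j * d \<le> n then 1 else (0::nat)) = (\<Sum>j<n. if j < n div d then 1 else 0)"
    by (rule sum.cong[OF refl]) (simp only: e)
  also have "\<dots> = min (n div d) n"
    by (rule sum_ind_min)
  finally show ?thesis using le by simp
qed

lemma mem_iff: "a \<in> set_decode G \<longleftrightarrow> (\<Sum>j<G. if Suc j * 2 ^ a \<le> G then 1 else 0) mod 2 = (1::nat)"
proof -
  have "G div 2 ^ a = (\<Sum>j<G. if Suc j * 2 ^ a \<le> G then 1 else 0)" by (rule div_sum) simp
  then show ?thesis by (simp only: set_decode_def mem_Collect_eq odd_iff_mod_2_eq_one)
qed

lemma PRP_mem: assumes "PR f" "PR g" shows "PRP (\<lambda>xs. f xs \<in> set_decode (g xs))"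
proof -
  have t1: "PR (\<lambda>xs. f (tl xs))" by (rule PR_tl[OF assms(1)])
  have t2: "PR (\<lambda>xs. g (tl xs))" by (rule PR_tl[OF assms(2)])
  have "PRP (\<lambda>xs. (\<Sum>j<g xs. if Suc j * 2 ^ f xs \<le> g xs then 1 else 0) mod 2 = (1::nat))"
    by (intro PRP_eq PR_mod2 PR_bsum PR_if PRP_le PR_mult PR_pow2 PR_Suc PR_proj PR_const t1 t2 assms)
  then show ?thesis by (simp add: mem_iff)
qed


definition cm :: "nat \<Rightarrow> nat" where "cm x = fst (prod_decode x)"
definition cG :: "nat \<Rightarrow> nat" where "cG x = fst (prod_decode (snd (prod_decode x)))"
definition cE :: "nat \<Rightarrow> nat" where "cE x = fst (prod_decode (snd (prod_decode (snd (prod_decode x)))))"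
definition ct :: "nat \<Rightarrow> nat" where
  "ct x = fst (prod_decode (snd (prod_decode (snd (prod_decode (snd (prod_decode x)))))))"
definition cs :: "nat \<Rightarrow> nat" where
  "cs x = snd (prod_decode (snd (prod_decode (snd (prod_decode (snd (prod_decode x)))))))"
definition enc :: "nat \<Rightarrow> nat \<Rightarrow> nat \<Rightarrow> nat \<Rightarrow> nat \<Rightarrow> nat" where
  "enc m G E t s = prod_encode (m, prod_encode (G, prod_encode (E, prod_encode (t, s))))"

lemma enc_simps[simp]: "cm (enc m G E t s) = m" "cG (enc m G E t s) = G" "cE (enc m G E t s) = E"
  "ct (enc m G E t s) = t" "cs (enc m G E t s) = s"
  by (simp_all add: enc_def cm_def cG_def cE_def ct_def cs_def)

definition inE :: "nat \<Rightarrow> nat \<Rightarrow> nat \<Rightarrow> bool" where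
  "inE x a b \<longleftrightarrow> prod_encode (a, b) \<in> set_decode (cE x)"
definition inG :: "nat \<Rightarrow> nat \<Rightarrow> bool" where
  "inG x i \<longleftrightarrow> i \<in> set_decode (cG x)"

lemma mem_less: "n \<in> set_decode x \<Longrightarrow> n < x"
proof -
  assume "n \<in> set_decode x"
  then have "odd (x div 2 ^ n)" by (simp add: set_decode_def)
  then have "x div 2 ^ n \<noteq> 0" by (metis even_zero)
  then have "2 ^ n \<le> x" by (simp add: div_eq_0_iff not_less)
  moreover have "n < (2::nat) ^ n" by (rule less_exp)
  ultimately show ?thesis by linarith
qed

lemma inG_less: "inG x i \<Longrightarrow> i < cG x" unfolding inG_def by (rule mem_less)

locale approx =
  fixes R :: "nat \<Rightarrow> nat \<Rightarrow> bool" and Rt :: "nat \<Rightarrow> nat \<Rightarrow> nat \<Rightarrow> bool"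
    and W :: "nat \<Rightarrow> nat \<Rightarrow> bool" and Wt :: "nat \<Rightarrow> nat \<Rightarrow> nat \<Rightarrow> bool"
  assumes R_trans: "transp R"
    and R_Rt: "R a b \<longleftrightarrow> (\<exists>t. Rt t a b)"
    and Rt_mono: "Rt t a b \<Longrightarrow> t \<le> t' \<Longrightarrow> Rt t' a b"
    and W_Wt: "W i n \<longleftrightarrow> (\<exists>t. Wt t i n)"
    and Wt_mono: "Wt t i n \<Longrightarrow> t \<le> t' \<Longrightarrow> Wt t' i n"
begin

definition Valid :: "nat \<Rightarrow> bool" where "Valid x \<longleftrightarrow>
  (\<forall>a<cs x. \<forall>b<cs x. \<forall>c<cs x. inE x a b \<and> inE x b c \<longrightarrow> inE x a c) \<and>
  (\<forall>a<ct x. \<forall>b<ct x. Rt (ct x) a b \<longrightarrow> inE x a b) \<and>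
  (\<forall>p<cE x. p \<in> set_decode (cE x) \<longrightarrow> fst (prod_decode p) < cs x \<and> snd (prod_decode p) < cs x
        \<and> Rt (cs x) (fst (prod_decode p)) (snd (prod_decode p))) \<and>
  (\<forall>i<cG x. inG x i \<longrightarrow> (\<forall>n<ct x. \<not> (Wt (ct x) i n \<and> inE x n (cm x)))) \<and>
  (\<forall>i<ct x. inG x i \<or> (\<exists>n<cs x. Wt (cs x) i n \<and> inE x n (cm x)))"

definition Sq :: "nat \<Rightarrow> nat \<Rightarrow> bool" where "Sq x y \<longleftrightarrow> Valid x \<and> Valid y \<and> inE y (cm x) (cm y) \<and>
  (\<forall>p<cE x. p \<in> set_decode (cE x) \<longrightarrow> p \<in> set_decode (cE y)) \<and> ct x < ct y \<and>
  (\<forall>i<cG x. inG x i \<longrightarrow> inG y i)"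

lemma R_transI: "R a b \<Longrightarrow> R b c \<Longrightarrow> R a c"
  using R_trans by (meson transpE)

lemma Valid_E: assumes "Valid x" "inE x a b"
  shows "a < cs x" "b < cs x" "Rt (cs x) a b" "R a b"
proof -
  have p: "prod_encode (a, b) \<in> set_decode (cE x)" using assms(2) by (simp add: inE_def)
  then have "prod_encode (a, b) < cE x" by (rule mem_less)
  with p assms(1) have *: "a < cs x \<and> b < cs x \<and> Rt (cs x) a b"
    unfolding Valid_def by (metis fst_conv snd_conv prod_encode_inverse)
  then show "a < cs x" "b < cs x" "Rt (cs x) a b" by auto
  then show "R a b" using R_Rt by blast
qed

lemma Valid_trans: "Valid x \<Longrightarrow> inE x a b \<Longrightarrow> inE x b c \<Longrightarrow> inE x a c"
  using Valid_E(1,2)[of x a b] Valid_E(2)[of x b c] unfolding Valid_def by blast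

lemma Valid_Rt: "Valid x \<Longrightarrow> a < ct x \<Longrightarrow> b < ct x \<Longrightarrow> Rt (ct x) a b \<Longrightarrow> inE x a b"
  unfolding Valid_def by blast

lemma Valid_check: "Valid x \<Longrightarrow> inG x i \<Longrightarrow> n < ct x \<Longrightarrow> Wt (ct x) i n \<Longrightarrow> inE x n (cm x) \<Longrightarrow> False"
  using inG_less[of x i] unfolding Valid_def by blast

lemma Valid_compl: "Valid x \<Longrightarrow> i < ct x \<Longrightarrow> inG x i \<or> (\<exists>n. Wt (cs x) i n \<and> inE x n (cm x))"
  unfolding Valid_def by blast

lemma Sq_E: "Sq x y \<Longrightarrow> inE x a b \<Longrightarrow> inE y a b"
  unfolding Sq_def inE_def using mem_less by blast

lemma Sq_G: "Sq x y \<Longrightarrow> inG x i \<Longrightarrow> inG y i"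
  unfolding Sq_def using inG_less by blast

lemma Sq_ct: "Sq x y \<Longrightarrow> ct x < ct y" unfolding Sq_def by blast
lemma Sq_Valid: "Sq x y \<Longrightarrow> Valid x" "Sq x y \<Longrightarrow> Valid y" unfolding Sq_def by blast+
lemma Sq_m: "Sq x y \<Longrightarrow> inE y (cm x) (cm y)" unfolding Sq_def by blast

lemma SqI: "Valid x \<Longrightarrow> Valid y \<Longrightarrow> inE y (cm x) (cm y) \<Longrightarrow> (\<And>a b. inE x a b \<Longrightarrow> inE y a b)
   \<Longrightarrow> ct x < ct y \<Longrightarrow> (\<And>i. inG x i \<Longrightarrow> inG y i) \<Longrightarrow> Sq x y"
  unfolding Sq_def inE_def by (metis prod_decode_inverse surj_pair)

lemma Sq_trans: "Sq x y \<Longrightarrow> Sq y z \<Longrightarrow> Sq x z"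
proof -
  assume xy: "Sq x y" and yz: "Sq y z"
  show "Sq x z"
  proof (rule SqI)
    show "Valid x" "Valid z" using xy yz Sq_Valid by auto
    have "inE z (cm x) (cm y)" using Sq_E[OF yz Sq_m[OF xy]] .
    then show "inE z (cm x) (cm z)" using Valid_trans Sq_m[OF yz] \<open>Valid z\<close> by blast
    show "inE z a b" if "inE x a b" for a b using Sq_E xy yz that by blast
    show "ct x < ct z" using Sq_ct[OF xy] Sq_ct[OF yz] by simp
    show "inG z i" if "inG x i" for i using Sq_G xy yz that by blast
  qed
qed

lemma Sq_transp: "transp Sq" by (meson Sq_trans transpI)

lemma Pers_E: "Sq z z' \<Longrightarrow> inE z n (cm z) \<Longrightarrow> inE z' n (cm z')"
  using Sq_E Sq_m Valid_trans Sq_Valid(2) by blast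

end

context approx begin

definition Jof :: "nat set \<Rightarrow> nat set" where
  "Jof I = {x. Valid x \<and> cm x \<in> I \<and> (\<forall>i. inG x i \<longrightarrow> (\<forall>n\<in>I. \<not> W i n))}"
definition Iof :: "nat set \<Rightarrow> nat set" where
  "Iof J = {n. \<exists>x\<in>J. R n (cm x)}"

context
  fixes J assumes J: "is_ideal Sq J"
begin

lemma J_up: "x \<in> J \<Longrightarrow> \<exists>z\<in>J. Sq x z"
  using J unfolding is_ideal_def by blast

lemma J_low: "y \<in> J \<Longrightarrow> Sq x y \<Longrightarrow> x \<in> J"
  using J unfolding is_ideal_def by blast

lemma J_dir: "x \<in> J \<Longrightarrow> y \<in> J \<Longrightarrow> \<exists>z\<in>J. Sq x z \<and> Sq y z"
  using J unfolding is_ideal_def by blast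

lemma J_ne: "\<exists>x. x \<in> J"
  using J unfolding is_ideal_def by blast

lemma J_Valid: "x \<in> J \<Longrightarrow> Valid x"
  using J_up Sq_Valid by blast

lemma J_chain: "x \<in> J \<Longrightarrow> \<exists>z\<in>J. Sq x z \<and> N \<le> ct z"
proof (induction N)
  case 0 then show ?case using J_up by blast
next
  case (Suc N)
  then obtain z where z: "z \<in> J" "Sq x z" "N \<le> ct z" by blast
  then obtain z' where z': "z' \<in> J" "Sq z z'" using J_up by blast
  have "Sq x z'" using Sq_trans z z' by blast
  moreover have "Suc N \<le> ct z'" using Sq_ct[OF z'(2)] z(3) by simp
  ultimately show ?case using z' by blast
qed

lemma J_I: "x \<in> J \<Longrightarrow> cm x \<in> Iof J"
  unfolding Iof_def using J_up Sq_m Valid_E(4) Sq_Valid(2) by blast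

lemma K1: assumes "n \<in> Iof J" "x \<in> J" shows "\<exists>z\<in>J. Sq x z \<and> inE z n (cm z)"
proof -
  obtain y where y: "y \<in> J" "R n (cm y)" using assms(1) unfolding Iof_def by blast
  obtain w where w: "Rt w n (cm y)" using y(2) R_Rt by blast
  obtain u where u: "u \<in> J" "Sq x u" "Sq y u" using J_dir[OF assms(2) y(1)] by blast
  obtain z where z: "z \<in> J" "Sq u z" "max w (max (Suc n) (Suc (cm y))) \<le> ct z"
    using J_chain[OF u(1)] by blast
  have vz: "Valid z" using Sq_Valid(2)[OF z(2)] .
  have 1: "inE z n (cm y)"
    by (rule Valid_Rt[OF vz]) (use z(3) Rt_mono[OF w] in auto)
  have 2: "inE z (cm y) (cm u)" using Sq_E[OF z(2) Sq_m[OF u(3)]] .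
  have 3: "inE z (cm u) (cm z)" using Sq_m[OF z(2)] .
  have "inE z n (cm z)" using Valid_trans[OF vz Valid_trans[OF vz 1 2] 3] .
  moreover have "Sq x z" using Sq_trans u z by blast
  ultimately show ?thesis using z by blast
qed

lemma K1': assumes "n \<in> Iof J" "x \<in> J" shows "\<exists>z\<in>J. Sq x z \<and> inE z n (cm z) \<and> N \<le> ct z"
proof -
  obtain z where z: "z \<in> J" "Sq x z" "inE z n (cm z)" using K1 assms by blast
  obtain z' where z': "z' \<in> J" "Sq z z'" "N \<le> ct z'" using J_chain[OF z(1)] by blast
  show ?thesis using z z' Sq_trans Pers_E by blast
qed

lemma K2: assumes "x \<in> J" "inG x i" "n \<in> Iof J" shows "\<not> W i n"
proof
  assume "W i n"
  then obtain w where w: "Wt w i n" using W_Wt by blast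
  obtain z where z: "z \<in> J" "Sq x z" "inE z n (cm z)" "max w (Suc n) \<le> ct z"
    using K1'[OF assms(3) assms(1)] by blast
  show False
    by (rule Valid_check[OF Sq_Valid(2)[OF z(2)] Sq_G[OF z(2) assms(2)] _ _ z(3)])
       (use z(4) Wt_mono[OF w] in auto)
qed

lemma K3: assumes "x \<in> J" "\<forall>n\<in>Iof J. \<not> W i n" shows "\<exists>z\<in>J. Sq x z \<and> inG z i"
proof -
  obtain z where z: "z \<in> J" "Sq x z" "Suc i \<le> ct z" using J_chain[OF assms(1)] by blast
  have vz: "Valid z" using J_Valid z(1) by blast
  have "inG z i"
  proof (rule ccontr)
    assume "\<not> inG z i"
    then obtain n where n: "Wt (cs z) i n" "inE z n (cm z)" using Valid_compl[OF vz, of i] z(3) by (auto simp: Suc_le_eq)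
    have "n \<in> Iof J" unfolding Iof_def using Valid_E(4)[OF vz n(2)] z(1) by blast
    moreover have "W i n" using n(1) W_Wt by blast
    ultimately show False using assms(2) by blast
  qed
  then show ?thesis using z by blast
qed

lemma gather:
  assumes "finite F" "x \<in> J"
    and step: "\<And>j y. j \<in> F \<Longrightarrow> y \<in> J \<Longrightarrow> \<exists>z\<in>J. Sq y z \<and> P z j"
    and pers: "\<And>j z z'. P z j \<Longrightarrow> Sq z z' \<Longrightarrow> P z' j"
  shows "\<exists>z\<in>J. Sq x z \<and> (\<forall>j\<in>F. P z j)"
  using assms(1) step
proof (induction F)
  case empty then show ?case using J_up[OF assms(2)] by blast
next
  case (insert j F)
  then obtain z where z: "z \<in> J" "Sq x z" "\<forall>j\<in>F. P z j" by blast
  obtain z' where z': "z' \<in> J" "Sq z z'" "P z' j" using insert.prems[of j z] z(1) by blast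
  have "\<forall>j\<in>insert j F. P z' j" using z(3) z'(2,3) pers by blast
  then show ?case using z z' Sq_trans by blast
qed

lemma Iof_ideal: "is_ideal R (Iof J)"
  unfolding is_ideal_def
proof (intro conjI ballI allI impI)
  show "Iof J \<noteq> {}" using J_ne J_I by blast
next
  fix n m assume "n \<in> Iof J" "R m n"
  then show "m \<in> Iof J" unfolding Iof_def using R_transI by blast
next
  fix a b assume a: "a \<in> Iof J" and b: "b \<in> Iof J"
  obtain x where x: "x \<in> J" "R a (cm x)" using a unfolding Iof_def by blast
  obtain y where y: "y \<in> J" "R b (cm y)" using b unfolding Iof_def by blast
  obtain z where z: "z \<in> J" "Sq x z" "Sq y z" using J_dir x(1) y(1) by blast
  have "R (cm x) (cm z)" "R (cm y) (cm z)"
    using Valid_E(4) Sq_m Sq_Valid(2) z by blast+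
  then show "\<exists>c\<in>Iof J. R a c \<and> R b c"
    using J_I[OF z(1)] x y R_transI by blast
qed

lemma J_sub_JI: "J \<subseteq> Jof (Iof J)"
proof
  fix x assume x: "x \<in> J"
  show "x \<in> Jof (Iof J)" unfolding Jof_def
    using J_Valid[OF x] J_I[OF x] K2[OF x] by blast
qed

lemma JI_sub_J: "Jof (Iof J) \<subseteq> J"
proof
  fix x assume "x \<in> Jof (Iof J)"
  then have vx: "Valid x" and mx: "cm x \<in> Iof J" and gx: "\<And>i n. inG x i \<Longrightarrow> n \<in> Iof J \<Longrightarrow> \<not> W i n"
    unfolding Jof_def by blast+
  obtain x0 where x0: "x0 \<in> J" using J_ne by blast
  obtain z1 where z1: "z1 \<in> J" "Sq x0 z1" "inE z1 (cm x) (cm z1)" "max (ct x) (cs x) \<le> ct z1"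
    using K1'[OF mx x0] by blast
  obtain z where z: "z \<in> J" "Sq z1 z" "\<forall>i\<in>set_decode (cG x). inG z i"
  proof -
    have "\<exists>z\<in>J. Sq z1 z \<and> (\<forall>i\<in>set_decode (cG x). inG z i)"
    proof (rule gather[OF finite_set_decode z1(1)])
      fix j y assume "j \<in> set_decode (cG x)" "y \<in> J"
      then show "\<exists>z\<in>J. Sq y z \<and> inG z j" using K3 gx unfolding inG_def by blast
    next
      fix j z z' assume "inG z j" "Sq z z'" then show "inG z' j" by (rule Sq_G[rotated])
    qed
    then show ?thesis using that by blast
  qed
  have "Sq x z"
  proof (rule SqI[OF vx J_Valid[OF z(1)]])
    show "inE z (cm x) (cm z)" using Pers_E[OF z(2) z1(3)] .
    show "inE z a b" if "inE x a b" for a b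
    proof -
      have "a < cs x" "b < cs x" "Rt (cs x) a b" using Valid_E[OF vx that] by auto
      then have "inE z1 a b"
        using Valid_Rt[OF Sq_Valid(2)[OF z1(2)]] Rt_mono z1(4) by (meson le_trans less_le_trans max.boundedE)
      then show ?thesis using Sq_E[OF z(2)] by blast
    qed
    show "ct x < ct z" using z1(4) Sq_ct[OF z(2)] by simp
    show "inG z i" if "inG x i" for i using z(3) that unfolding inG_def by blast
  qed
  then show "x \<in> J" using J_low z(1) by blast
qed

lemma JI_eq: "Jof (Iof J) = J" using J_sub_JI JI_sub_J by blast

end

end

context approx begin

lemma ideal_fin_ub:
  assumes I: "is_ideal R I" and "finite F" "F \<subseteq> I"
  shows "\<exists>c\<in>I. \<forall>a\<in>F. R a c"
  using assms(2,3)
proof (induction F)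
  case empty
  obtain n where "n \<in> I" using I unfolding is_ideal_def by blast
  then show ?case using I unfolding is_ideal_def by blast
next
  case (insert a F)
  then obtain c where c: "c \<in> I" "\<forall>b\<in>F. R b c" by blast
  obtain c' where c': "c' \<in> I" "R a c'" "R c c'" using I c(1) insert.prems unfolding is_ideal_def by blast
  show ?case using c c' R_transI by blast
qed

lemma ideal_lower: "is_ideal R I \<Longrightarrow> n \<in> I \<Longrightarrow> R m n \<Longrightarrow> m \<in> I"
  unfolding is_ideal_def by blast

lemma inE_enc: "finite E \<Longrightarrow> inE (enc m (set_encode G) (set_encode (prod_encode ` E)) t s) a b \<longleftrightarrow> (a, b) \<in> E"
  unfolding inE_def using inj_prod_encode[of UNIV] by (auto simp: inj_image_mem_iff)

lemma inG_enc: "finite G \<Longrightarrow> inG (enc m (set_encode G) Ec t s) i \<longleftrightarrow> i \<in> G"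
  unfolding inG_def by simp

lemma Jof_dir:
  assumes I: "is_ideal R I" and x1: "x1 \<in> Jof I" and x2: "x2 \<in> Jof I"
  shows "\<exists>z\<in>Jof I. Sq x1 z \<and> Sq x2 z"
proof -
  have v1: "Valid x1" and m1: "cm x1 \<in> I" and g1: "\<And>i n. inG x1 i \<Longrightarrow> n \<in> I \<Longrightarrow> \<not> W i n"
    using x1 unfolding Jof_def by blast+
  have v2: "Valid x2" and m2: "cm x2 \<in> I" and g2: "\<And>i n. inG x2 i \<Longrightarrow> n \<in> I \<Longrightarrow> \<not> W i n"
    using x2 unfolding Jof_def by blast+
  define t where "t = Suc (max (ct x1) (ct x2))"
  define Bad where "Bad = {i. i < t \<and> (\<exists>n\<in>I. W i n)}"
  have finBad: "finite Bad" unfolding Bad_def by simp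
  have "\<forall>i\<in>Bad. \<exists>n. n \<in> I \<and> W i n" unfolding Bad_def by blast
  from bchoice[OF this] obtain nb where nb: "\<And>i. i \<in> Bad \<Longrightarrow> nb i \<in> I \<and> W i (nb i)" by blast
  define F0 where "F0 = {cm x1, cm x2} \<union> nb ` Bad"
  have F0I: "F0 \<subseteq> I" unfolding F0_def using m1 m2 nb by blast
  have finF0: "finite F0" unfolding F0_def using finBad by simp
  obtain c where c: "c \<in> I" "\<And>a. a \<in> F0 \<Longrightarrow> R a c"
    using ideal_fin_ub[OF I finF0 F0I] by blast
  define EXs where "EXs x = {(a, b). inE x a b}" for x
  have finEXs: "finite (EXs x)" if "Valid x" for x
  proof -
    have "EXs x \<subseteq> {..<cs x} \<times> {..<cs x}" unfolding EXs_def using Valid_E[OF that] by auto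
    then show ?thesis by (rule finite_subset) simp
  qed
  define B where "B = EXs x1 \<union> EXs x2 \<union> {(a, b). a < t \<and> b < t \<and> Rt t a b} \<union> (\<lambda>a. (a, c)) ` F0"
  have f3: "finite {(a, b). a < t \<and> b < t \<and> Rt t a b}"
    by (rule finite_subset[of _ "{..<t} \<times> {..<t}"]) auto
  have finB: "finite B" unfolding B_def using finEXs[OF v1] finEXs[OF v2] f3 finF0 by simp
  define E where "E = B\<^sup>+"
  have finE: "finite E" unfolding E_def using finB by (simp add: finite_trancl)
  have BR: "B \<subseteq> {(a, b). R a b}"
    unfolding B_def EXs_def using Valid_E(4)[OF v1] Valid_E(4)[OF v2] c(2) R_Rt by auto
  have transR: "trans {(a, b). R a b}" using R_trans by (simp add: trans_def transp_def)
  have ER: "E \<subseteq> {(a, b). R a b}"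
    unfolding E_def using trancl_mono[OF _ BR] trancl_id[OF transR] by auto
  have BE: "B \<subseteq> E" unfolding E_def by auto
  have transE: "trans E" unfolding E_def by (rule trans_trancl)
  have "\<forall>p\<in>E. \<exists>w. Rt w (fst p) (snd p)" using ER R_Rt by auto
  from bchoice[OF this] obtain wR where wR: "\<And>p. p \<in> E \<Longrightarrow> Rt (wR p) (fst p) (snd p)" by blast
  have "\<forall>i\<in>Bad. \<exists>w. Wt w i (nb i)" using nb W_Wt by blast
  from bchoice[OF this] obtain wW where wW: "\<And>i. i \<in> Bad \<Longrightarrow> Wt (wW i) i (nb i)" by blast
  define s where "s = Suc ((\<Sum>p\<in>E. fst p + snd p + wR p) + (\<Sum>i\<in>Bad. nb i + wW i))"
  have sE: "fst p < s \<and> snd p < s \<and> wR p < s" if "p \<in> E" for p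
  proof -
    have "fst p + snd p + wR p \<le> (\<Sum>p\<in>E. fst p + snd p + wR p)"
      using member_le_sum[OF that _ finE, of "\<lambda>p. fst p + snd p + wR p"] by simp
    then show ?thesis unfolding s_def by linarith
  qed
  have sB: "nb i < s \<and> wW i < s" if "i \<in> Bad" for i
  proof -
    have "nb i + wW i \<le> (\<Sum>i\<in>Bad. nb i + wW i)"
      using member_le_sum[OF that _ finBad, of "\<lambda>i. nb i + wW i"] by simp
    then show ?thesis unfolding s_def by linarith
  qed
  define Gs where "Gs = {i. i < t \<and> i \<notin> Bad} \<union> set_decode (cG x1) \<union> set_decode (cG x2)"
  have finGs: "finite Gs" unfolding Gs_def by simp
  define z where "z = enc c (set_encode Gs) (set_encode (prod_encode ` E)) t s"
  have zE: "inE z a b \<longleftrightarrow> (a, b) \<in> E" for a b unfolding z_def by (rule inE_enc[OF finE])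
  have zG: "inG z i \<longleftrightarrow> i \<in> Gs" for i unfolding z_def by (rule inG_enc[OF finGs])
  have [simp]: "cm z = c" "ct z = t" "cs z = s" "cE z = set_encode (prod_encode ` E)"
    unfolding z_def by simp_all
  have good: "\<not> W i n" if iG: "i \<in> Gs" and nI: "n \<in> I" for i n
  proof -
    have "(i < t \<and> i \<notin> Bad) \<or> inG x1 i \<or> inG x2 i" using iG unfolding Gs_def inG_def by blast
    then show ?thesis using g1 g2 nI unfolding Bad_def by blast
  qed
  have vz: "Valid z"
    unfolding Valid_def
  proof (intro conjI allI impI)
    fix a b cc assume "inE z a b \<and> inE z b cc"
    then show "inE z a cc" using transE unfolding zE by (meson transD)
  next
    fix a b assume "a < ct z" "b < ct z" "Rt (ct z) a b"
    then show "inE z a b" unfolding zE using BE unfolding B_def by auto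
  next
    fix p assume "p \<in> set_decode (cE z)"
    then have "p \<in> prod_encode ` E" using finE by simp
    then obtain q where q: "q \<in> E" "p = prod_encode q" by blast
    then have "fst (prod_decode p) = fst q" "snd (prod_decode p) = snd q" by simp_all
    then show "fst (prod_decode p) < cs z" "snd (prod_decode p) < cs z"
      "Rt (cs z) (fst (prod_decode p)) (snd (prod_decode p))"
      using sE[OF q(1)] wR[OF q(1)] Rt_mono by auto
  next
    fix i n assume i: "inG z i" and n: "n < ct z"
    show "\<not> (Wt (ct z) i n \<and> inE z n (cm z))"
    proof
      assume "Wt (ct z) i n \<and> inE z n (cm z)"
      then have "W i n" "R n c" using W_Wt ER zE by auto
      then show False using good[of i n] i zG ideal_lower[OF I c(1)] by blast
    qed
  next
    fix i assume i: "i < ct z"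
    show "inG z i \<or> (\<exists>n<cs z. Wt (cs z) i n \<and> inE z n (cm z))"
    proof (cases "i \<in> Bad")
      case False then show ?thesis using i zG unfolding Gs_def by auto
    next
      case True
      have "(nb i, c) \<in> E" using BE True unfolding B_def F0_def by blast
      then show ?thesis using sB[OF True] wW[OF True] Wt_mono zE by auto
    qed
  qed
  have zJ: "z \<in> Jof I" unfolding Jof_def using vz c(1) good zG by auto
  have sq: "Sq x z" if x: "x \<in> {x1, x2}" for x
  proof (rule SqI)
    show "Valid x" using x v1 v2 by blast
    show "Valid z" by (rule vz)
    show "inE z (cm x) (cm z)" using x BE c unfolding zE B_def F0_def by auto
    show "inE z a b" if "inE x a b" for a b using x that BE unfolding zE B_def EXs_def by auto
    show "ct x < ct z" using x by (auto simp: t_def)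
    show "inG z i" if "inG x i" for i using x that zG unfolding Gs_def inG_def by auto
  qed
  show ?thesis using zJ sq by blast
qed

lemma Jof_ideal: assumes I: "is_ideal R I" shows "is_ideal Sq (Jof I)"
  unfolding is_ideal_def
proof (intro conjI ballI allI impI)
  obtain n where n: "n \<in> I" using I unfolding is_ideal_def by blast
  have "Valid (enc n 0 0 0 0)" unfolding Valid_def inG_def by simp
  then have "enc n 0 0 0 0 \<in> Jof I" unfolding Jof_def inG_def using n by simp
  then show "Jof I \<noteq> {}" by blast
next
  fix y x assume y: "y \<in> Jof I" and xy: "Sq x y"
  have "R (cm x) (cm y)" using Valid_E(4)[OF Sq_Valid(2)[OF xy] Sq_m[OF xy]] .
  then have "cm x \<in> I" using y ideal_lower[OF I] unfolding Jof_def by blast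
  then show "x \<in> Jof I" using y Sq_Valid(1)[OF xy] Sq_G[OF xy] unfolding Jof_def by blast
next
  fix a b assume "a \<in> Jof I" "b \<in> Jof I"
  then show "\<exists>c\<in>Jof I. Sq a c \<and> Sq b c" using Jof_dir[OF I] by blast
qed

lemma IJ_eq: assumes I: "is_ideal R I" shows "Iof (Jof I) = I"
proof
  show "Iof (Jof I) \<subseteq> I" unfolding Iof_def Jof_def using ideal_lower[OF I] by blast
next
  show "I \<subseteq> Iof (Jof I)"
  proof
    fix n assume n: "n \<in> I"
    then obtain c where c: "c \<in> I" "R n c" using I unfolding is_ideal_def by blast
    have "Valid (enc c 0 0 0 0)" unfolding Valid_def inG_def by simp
    then have "enc c 0 0 0 0 \<in> Jof I" unfolding Jof_def inG_def using c by simp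
    then show "n \<in> Iof (Jof I)" unfolding Iof_def using c by force
  qed
qed

end

lemma topspace_ideal: "topspace (ideal_topology S) = Ideals S"
  unfolding ideal_topology_def topology_generated_by_topspace bopen_def Ideals_def is_ideal_def
  by blast

lemma bopen_sub: "bopen S n \<subseteq> Ideals S" unfolding bopen_def by blast
lemma coce_sub: "coce_closed R W i \<subseteq> Ideals R" unfolding coce_closed_def by blast

lemma topspace_ext: "topspace (ext_topology R W) = Ideals R"
proof -
  have 1: "Ideals R \<subseteq> \<Union>(range (bopen R))"
    unfolding bopen_def Ideals_def is_ideal_def by blast
  have 2: "\<Union>(range (bopen R)) \<subseteq> \<Union>(range (bopen R) \<union> range (coce_closed R W))"
    by (rule Union_mono) (rule Un_upper1)
  have 3: "\<Union>(range (bopen R) \<union> range (coce_closed R W)) \<subseteq> Ideals R"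
    by (rule Union_least) (auto intro: bopen_sub[THEN subsetD] coce_sub[THEN subsetD])
  have "\<Union>(range (bopen R) \<union> range (coce_closed R W)) = Ideals R"
    by (rule subset_antisym[OF 3 order_trans[OF 1 2]])
  then show ?thesis
    unfolding ext_topology_def topology_generated_by_topspace .
qed

lemma mem_coce: "I \<in> coce_closed R W i \<longleftrightarrow> I \<in> Ideals R \<and> (\<forall>n\<in>I. \<not> W i n)"
  unfolding coce_closed_def bopen_def by blast

lemma mem_subbasic: "I \<in> subbasic R W j \<longleftrightarrow> I \<in> Ideals R \<and>
   (even j \<longrightarrow> j div 2 \<in> I) \<and> (odd j \<longrightarrow> (\<forall>n\<in>I. \<not> W (j div 2) n))"
  by (auto simp: subbasic_def mem_coce bopen_def)

lemma mem_ext_basic: "I \<in> ext_basic R W k \<longleftrightarrow> I \<in> Ideals R \<and>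
   (\<forall>j\<in>set_decode k. (even j \<longrightarrow> j div 2 \<in> I) \<and> (odd j \<longrightarrow> (\<forall>n\<in>I. \<not> W (j div 2) n)))"
proof -
  have "I \<in> ext_basic R W k \<longleftrightarrow> I \<in> Ideals R \<and> (\<forall>j\<in>set_decode k. I \<in> subbasic R W j)"
    unfolding ext_basic_def by blast
  then show ?thesis unfolding mem_subbasic by blast
qed

lemma open_inter_subbasic: "finite F \<Longrightarrow>
  openin (ext_topology R W) (topspace (ext_topology R W) \<inter> (\<Inter>j\<in>F. subbasic R W j))"
proof (induction F rule: finite_induct)
  case empty then show ?case by simp
next
  case (insert a F)
  have "openin (ext_topology R W) (subbasic R W a)"
    unfolding ext_topology_def subbasic_def by (auto intro: topology_generated_by_Basis)
  then have "openin (ext_topology R W) (subbasic R W a \<inter> (topspace (ext_topology R W) \<inter> (\<Inter>j\<in>F. subbasic R W j)))"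
    using insert by blast
  moreover have "subbasic R W a \<inter> (topspace (ext_topology R W) \<inter> (\<Inter>j\<in>F. subbasic R W j)) =
    topspace (ext_topology R W) \<inter> (\<Inter>j\<in>insert a F. subbasic R W j)" by blast
  ultimately show ?case by simp
qed

lemma open_ext_basic: "openin (ext_topology R W) (ext_basic R W k)"
  using open_inter_subbasic[OF finite_set_decode[of k], of R W]
  unfolding ext_basic_def topspace_ext .

lemma bopen_basic: "bopen R n = ext_basic R W (set_encode {2 * n})"
proof -
  have "set_decode (set_encode {2 * n}) = {2 * n}" by (rule set_encode_inverse) simp
  then show ?thesis unfolding ext_basic_def subbasic_def using bopen_sub[of R n] by auto
qed

lemma coce_basic: "coce_closed R W i = ext_basic R W (set_encode {2 * i + 1})"
proof -
  have "set_decode (set_encode {2 * i + 1}) = {2 * i + 1}" by (rule set_encode_inverse) simp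
  then show ?thesis unfolding ext_basic_def subbasic_def using coce_sub[of R W i] by auto
qed

context approx begin

definition CS :: "nat \<Rightarrow> nat set" where
  "CS x = insert (2 * cm x) ((\<lambda>i. 2 * i + 1) ` set_decode (cG x))"

definition Vrel :: "nat \<Rightarrow> nat \<Rightarrow> bool" where
  "Vrel x k \<longleftrightarrow> Valid x \<and> set_decode k = CS x"

definition V'rel :: "nat \<Rightarrow> nat \<Rightarrow> bool" where
  "V'rel k x \<longleftrightarrow> Valid x \<and> (\<forall>j\<in>set_decode k. (even j \<longrightarrow> inE x (j div 2) (cm x)) \<and> (odd j \<longrightarrow> inG x (j div 2)))"

lemma Jof_mem: "is_ideal R I \<Longrightarrow> x \<in> Jof I \<longleftrightarrow> (Valid x \<and> I \<in> ext_basic R W (set_encode (CS x)))"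
proof -
  assume I: "is_ideal R I"
  have fin: "finite (CS x)" unfolding CS_def by simp
  show ?thesis
    unfolding Jof_def mem_ext_basic set_encode_inverse[OF fin] CS_def inG_def
    using I by (auto simp: Ideals_def)
qed

lemma pre_f: "{I \<in> topspace (ext_topology R W). Jof I \<in> bopen Sq m} = (\<Union>k\<in>{k. Vrel m k}. ext_basic R W k)"
proof -
  have "{I \<in> topspace (ext_topology R W). Jof I \<in> bopen Sq m} = {I \<in> Ideals R. Valid m \<and> I \<in> ext_basic R W (set_encode (CS m))}"
  proof -
    have "Jof I \<in> bopen Sq m \<longleftrightarrow> Valid m \<and> I \<in> ext_basic R W (set_encode (CS m))" if "I \<in> Ideals R" for I
    proof -
      from that have I: "is_ideal R I" by (simp add: Ideals_def)
      have "Jof I \<in> Ideals Sq" using Jof_ideal[OF I] by (simp add: Ideals_def)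
      then show ?thesis unfolding bopen_def using Jof_mem[OF I] by blast
    qed
    then show ?thesis unfolding topspace_ext by blast
  qed
  also have "\<dots> = (\<Union>k\<in>{k. Vrel m k}. ext_basic R W k)"
  proof -
    have fin: "finite (CS m)" unfolding CS_def by simp
    have "ext_basic R W k = ext_basic R W (set_encode (CS m))" if "set_decode k = CS m" for k
      unfolding ext_basic_def that set_encode_inverse[OF fin] ..
    moreover have "Vrel m (set_encode (CS m))" if "Valid m" unfolding Vrel_def using that fin by simp
    ultimately show ?thesis unfolding Vrel_def using ext_basic_def by auto
  qed
  finally show ?thesis .
qed

lemma pre_g: "{J \<in> topspace (ideal_topology Sq). Iof J \<in> ext_basic R W k} = (\<Union>x\<in>{x. V'rel k x}. bopen Sq x)"
proof (intro equalityI subsetI)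
  fix J assume "J \<in> {J \<in> topspace (ideal_topology Sq). Iof J \<in> ext_basic R W k}"
  then have J: "is_ideal Sq J" and IJ: "Iof J \<in> ext_basic R W k"
    unfolding topspace_ideal Ideals_def by auto
  obtain x0 where x0: "x0 \<in> J" using J_ne[OF J] by blast
  have "\<exists>z\<in>J. Sq x0 z \<and> (\<forall>j\<in>set_decode k. (even j \<longrightarrow> inE z (j div 2) (cm z)) \<and> (odd j \<longrightarrow> inG z (j div 2)))"
  proof (rule gather[OF J finite_set_decode x0])
    fix j y assume j: "j \<in> set_decode k" and y: "y \<in> J"
    show "\<exists>z\<in>J. Sq y z \<and> (even j \<longrightarrow> inE z (j div 2) (cm z)) \<and> (odd j \<longrightarrow> inG z (j div 2))"
    proof (cases "even j")
      case True
      then have "j div 2 \<in> Iof J" using IJ j unfolding mem_ext_basic by blast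
      then show ?thesis using K1[OF J _ y] True by blast
    next
      case False
      then have "\<forall>n\<in>Iof J. \<not> W (j div 2) n" using IJ j unfolding mem_ext_basic by blast
      then show ?thesis using K3[OF J y] False by blast
    qed
  next
    fix j z z' assume "(even j \<longrightarrow> inE z (j div 2) (cm z)) \<and> (odd j \<longrightarrow> inG z (j div 2))" "Sq z z'"
    then show "(even j \<longrightarrow> inE z' (j div 2) (cm z')) \<and> (odd j \<longrightarrow> inG z' (j div 2))"
      using Pers_E Sq_G by blast
  qed
  then obtain z where z: "z \<in> J" "\<forall>j\<in>set_decode k. (even j \<longrightarrow> inE z (j div 2) (cm z)) \<and> (odd j \<longrightarrow> inG z (j div 2))"
    by blast
  have "V'rel k z" unfolding V'rel_def using z J_Valid[OF J z(1)] by blast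
  moreover have "J \<in> bopen Sq z" unfolding bopen_def Ideals_def using J z(1) by blast
  ultimately show "J \<in> (\<Union>x\<in>{x. V'rel k x}. bopen Sq x)" by blast
next
  fix J assume "J \<in> (\<Union>x\<in>{x. V'rel k x}. bopen Sq x)"
  then obtain x where x: "V'rel k x" "J \<in> bopen Sq x" by blast
  then have J: "is_ideal Sq J" and xJ: "x \<in> J" unfolding bopen_def Ideals_def by auto
  have "Iof J \<in> Ideals R" using Iof_ideal[OF J] by (simp add: Ideals_def)
  moreover have "(even j \<longrightarrow> j div 2 \<in> Iof J) \<and> (odd j \<longrightarrow> (\<forall>n\<in>Iof J. \<not> W (j div 2) n))"
    if j: "j \<in> set_decode k" for j
  proof (intro conjI impI ballI)
    assume "even j"
    then have "inE x (j div 2) (cm x)" using x(1) j unfolding V'rel_def by blast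
    then show "j div 2 \<in> Iof J" unfolding Iof_def using Valid_E(4) x(1) xJ unfolding V'rel_def by blast
  next
    fix n assume "odd j" "n \<in> Iof J"
    then show "\<not> W (j div 2) n" using K2[OF J xJ] x(1) j unfolding V'rel_def by blast
  qed
  ultimately have "Iof J \<in> ext_basic R W k" unfolding mem_ext_basic by blast
  then show "J \<in> {J \<in> topspace (ideal_topology Sq). Iof J \<in> ext_basic R W k}"
    unfolding topspace_ideal Ideals_def using J by blast
qed

lemma homeo: "homeomorphic_maps (ext_topology R W) (ideal_topology Sq) Jof Iof"
  unfolding homeomorphic_maps_def
proof (intro conjI ballI)
  show "continuous_map (ext_topology R W) (ideal_topology Sq) Jof"
    unfolding ideal_topology_def
  proof (rule continuous_on_generated_topo)
    fix U assume "U \<in> range (bopen Sq)"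
    then obtain m where U: "U = bopen Sq m" by blast
    have "Jof -` U \<inter> topspace (ext_topology R W) = {I \<in> topspace (ext_topology R W). Jof I \<in> bopen Sq m}"
      using U by blast
    also have "\<dots> = (\<Union>k\<in>{k. Vrel m k}. ext_basic R W k)" by (rule pre_f)
    finally show "openin (ext_topology R W) (Jof -` U \<inter> topspace (ext_topology R W))"
      using open_ext_basic by auto
  next
    have "Jof ` topspace (ext_topology R W) \<subseteq> Ideals Sq"
      unfolding topspace_ext using Jof_ideal by (auto simp: Ideals_def)
    then show "Jof ` topspace (ext_topology R W) \<subseteq> \<Union> (range (bopen Sq))"
      using topspace_ideal[of Sq] unfolding ideal_topology_def by simp
  qed
next
  show "continuous_map (ideal_topology Sq) (ext_topology R W) Iof"
    unfolding ext_topology_def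
  proof (rule continuous_on_generated_topo)
    fix U assume "U \<in> range (bopen R) \<union> range (coce_closed R W)"
    then obtain k where U: "U = ext_basic R W k" using bopen_basic coce_basic by blast
    have "Iof -` U \<inter> topspace (ideal_topology Sq) = {J \<in> topspace (ideal_topology Sq). Iof J \<in> ext_basic R W k}"
      using U by blast
    also have "\<dots> = (\<Union>x\<in>{x. V'rel k x}. bopen Sq x)" by (rule pre_g)
    finally show "openin (ideal_topology Sq) (Iof -` U \<inter> topspace (ideal_topology Sq))"
      unfolding ideal_topology_def by (auto intro: topology_generated_by_Basis)
  next
    have "Iof ` topspace (ideal_topology Sq) \<subseteq> Ideals R"
      unfolding topspace_ideal using Iof_ideal by (auto simp: Ideals_def)
    then show "Iof ` topspace (ideal_topology Sq) \<subseteq> \<Union> (range (bopen R) \<union> range (coce_closed R W))"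
      using topspace_ext[of R W] unfolding ext_topology_def by simp
  qed
next
  fix I assume "I \<in> topspace (ext_topology R W)"
  then show "Iof (Jof I) = I" using IJ_eq unfolding topspace_ext Ideals_def by blast
next
  fix J assume "J \<in> topspace (ideal_topology Sq)"
  then show "Jof (Iof J) = J" using JI_eq unfolding topspace_ideal Ideals_def by blast
qed

end

lemma PR_proj_tl2: "PR (\<lambda>xs. proj i (tl (tl xs)))"
  by (simp add: proj_tl PR_proj)
lemma PR_proj_tl3: "PR (\<lambda>xs. proj i (tl (tl (tl xs))))"
  by (simp add: proj_tl PR_proj)

lemma PR_cm: "PR f \<Longrightarrow> PR (\<lambda>xs. cm (f xs))" unfolding cm_def by (rule PR_pf)
lemma PR_cG: "PR f \<Longrightarrow> PR (\<lambda>xs. cG (f xs))" unfolding cG_def by (intro PR_pf PR_ps)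
lemma PR_cE: "PR f \<Longrightarrow> PR (\<lambda>xs. cE (f xs))" unfolding cE_def by (intro PR_pf PR_ps)
lemma PR_ct: "PR f \<Longrightarrow> PR (\<lambda>xs. ct (f xs))" unfolding ct_def by (intro PR_pf PR_ps)
lemma PR_cs: "PR f \<Longrightarrow> PR (\<lambda>xs. cs (f xs))" unfolding cs_def by (intro PR_pf PR_ps)

lemma PRP_inE: "PR f \<Longrightarrow> PR a \<Longrightarrow> PR b \<Longrightarrow> PRP (\<lambda>xs. inE (f xs) (a xs) (b xs))"
  unfolding inE_def by (intro PRP_mem PR_pe PR_cE)
lemma PRP_inG: "PR f \<Longrightarrow> PR a \<Longrightarrow> PRP (\<lambda>xs. inG (f xs) (a xs))"
  unfolding inG_def by (intro PRP_mem PR_cG)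

lemma PRP_iff: "PRP P \<Longrightarrow> PRP Q \<Longrightarrow> PRP (\<lambda>xs. P xs \<longleftrightarrow> Q xs)"
proof -
  assume "PRP P" "PRP Q"
  then have "PRP (\<lambda>xs. (P xs \<longrightarrow> Q xs) \<and> (Q xs \<longrightarrow> P xs))" by (intro PRP_and PRP_imp)
  then show ?thesis by (simp add: iff_conv_conj_imp)
qed

lemma PRP_odd: "PR f \<Longrightarrow> PRP (\<lambda>xs. odd (f xs))"
proof -
  assume "PR f"
  then have "PRP (\<lambda>xs. f xs mod 2 = 1)" by (intro PRP_eq PR_mod2 PR_const)
  then show ?thesis by (simp add: odd_iff_mod_2_eq_one)
qed

lemma PRP_even: "PR f \<Longrightarrow> PRP (\<lambda>xs. even (f xs))"
  using PRP_not[OF PRP_odd] by simp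

lemma PR_div2: "PR f \<Longrightarrow> PR (\<lambda>xs. f xs div 2)"
proof -
  assume f: "PR f"
  have t1: "PR (\<lambda>xs. f (tl xs))" by (rule PR_tl[OF f])
  have "PR (\<lambda>xs. \<Sum>j<f xs. if Suc j * 2 \<le> f xs then 1 else 0)"
    by (intro PR_bsum PR_if PRP_le PR_mult PR_Suc PR_proj PR_const t1 f)
  moreover have "f xs div 2 = (\<Sum>j<f xs. if Suc j * 2 \<le> f xs then 1 else 0)" for xs
    by (rule div_sum) simp
  ultimately show ?thesis by simp
qed

definition RtP :: "(nat list \<Rightarrow> nat) \<Rightarrow> nat \<Rightarrow> nat \<Rightarrow> nat \<Rightarrow> nat \<Rightarrow> bool" where
  "RtP f e t a b \<longleftrightarrow> (\<exists>w<t. f [w, e, a, b] \<noteq> 0)"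

definition ValidB :: "(nat list \<Rightarrow> nat) \<Rightarrow> (nat list \<Rightarrow> nat) \<Rightarrow> nat \<Rightarrow> nat \<Rightarrow> bool" where
  "ValidB fP fW e x \<longleftrightarrow>
  (\<forall>a<cs x. \<forall>b<cs x. \<forall>c<cs x. inE x a b \<and> inE x b c \<longrightarrow> inE x a c) \<and>
  (\<forall>a<ct x. \<forall>b<ct x. (\<exists>w<ct x. fP [w, e, a, b] \<noteq> 0) \<longrightarrow> inE x a b) \<and>
  (\<forall>p<cE x. p \<in> set_decode (cE x) \<longrightarrow> fst (prod_decode p) < cs x \<and> snd (prod_decode p) < cs x
        \<and> (\<exists>w<cs x. fP [w, e, fst (prod_decode p), snd (prod_decode p)] \<noteq> 0)) \<and>
  (\<forall>i<cG x. inG x i \<longrightarrow> (\<forall>n<ct x. \<not> ((\<exists>w<ct x. fW [w, e, i, n] \<noteq> 0) \<and> inE x n (cm x)))) \<and>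
  (\<forall>i<ct x. inG x i \<or> (\<exists>n<cs x. (\<exists>w<cs x. fW [w, e, i, n] \<noteq> 0) \<and> inE x n (cm x)))"

definition SqB :: "(nat list \<Rightarrow> nat) \<Rightarrow> (nat list \<Rightarrow> nat) \<Rightarrow> nat \<Rightarrow> nat \<Rightarrow> nat \<Rightarrow> bool" where
  "SqB fP fW e x y \<longleftrightarrow> ValidB fP fW e x \<and> ValidB fP fW e y \<and> inE y (cm x) (cm y) \<and>
  (\<forall>p<cE x. p \<in> set_decode (cE x) \<longrightarrow> p \<in> set_decode (cE y)) \<and> ct x < ct y \<and>
  (\<forall>i<cG x. inG x i \<longrightarrow> inG y i)"

definition VB :: "(nat list \<Rightarrow> nat) \<Rightarrow> (nat list \<Rightarrow> nat) \<Rightarrow> nat \<Rightarrow> nat \<Rightarrow> nat \<Rightarrow> bool" where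
  "VB fP fW e x k \<longleftrightarrow> ValidB fP fW e x \<and>
    (\<forall>j<k. j \<in> set_decode k \<longleftrightarrow> (j = 2 * cm x \<or> (odd j \<and> inG x (j div 2)))) \<and>
    2 * cm x \<in> set_decode k \<and> (\<forall>i<cG x. inG x i \<longrightarrow> 2 * i + 1 \<in> set_decode k)"

definition V'B :: "(nat list \<Rightarrow> nat) \<Rightarrow> (nat list \<Rightarrow> nat) \<Rightarrow> nat \<Rightarrow> nat \<Rightarrow> nat \<Rightarrow> bool" where
  "V'B fP fW e k x \<longleftrightarrow> ValidB fP fW e x \<and>
    (\<forall>j<k. j \<in> set_decode k \<longrightarrow> (even j \<longrightarrow> inE x (j div 2) (cm x)) \<and> (odd j \<longrightarrow> inG x (j div 2)))"

lemma PRP_ValidB: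
  assumes P: "PR fP" and Wf: "PR fW" and e: "PR fe" and x: "PR fx"
  shows "PRP (\<lambda>xs. ValidB fP fW (fe xs) (fx xs))"
proof -
  have e1: "PR (\<lambda>xs. fe (tl xs))" by (rule PR_tl[OF e])
  have e2: "PR (\<lambda>xs. fe (tl (tl xs)))" by (rule PR_tl[OF e1])
  have e3: "PR (\<lambda>xs. fe (tl (tl (tl xs))))" by (rule PR_tl[OF e2])
  have e4: "PR (\<lambda>xs. fe (tl (tl (tl (tl xs)))))" by (rule PR_tl[OF e3])
  have x1: "PR (\<lambda>xs. fx (tl xs))" by (rule PR_tl[OF x])
  have x2: "PR (\<lambda>xs. fx (tl (tl xs)))" by (rule PR_tl[OF x1])
  have x3: "PR (\<lambda>xs. fx (tl (tl (tl xs))))" by (rule PR_tl[OF x2])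
  have x4: "PR (\<lambda>xs. fx (tl (tl (tl (tl xs)))))" by (rule PR_tl[OF x3])
  show ?thesis unfolding ValidB_def
    by (intro PRP_and PRP_ball PRP_imp PRP_bex PRP_or PRP_not PRP_nz PRP_less PRP_mem PRP_inE PRP_inG
        PR_comp4[OF P] PR_comp4[OF Wf] PR_pf PR_ps PR_cm PR_cG PR_cE PR_ct PR_cs
        PR_proj PR_proj_tl PR_proj_tl2 PR_proj_tl3 e e1 e2 e3 e4 x x1 x2 x3 x4)
qed


lemma PRP_SqB:
  assumes P: "PR fP" and Wf: "PR fW" and e: "PR fe" and x: "PR fx" and y: "PR fy"
  shows "PRP (\<lambda>xs. SqB fP fW (fe xs) (fx xs) (fy xs))"
proof -
  have x1: "PR (\<lambda>xs. fx (tl xs))" by (rule PR_tl[OF x])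
  have y1: "PR (\<lambda>xs. fy (tl xs))" by (rule PR_tl[OF y])
  show ?thesis unfolding SqB_def
    by (intro PRP_and PRP_ball PRP_imp PRP_less PRP_mem PRP_inE PRP_inG PRP_ValidB[OF P Wf]
        PR_cm PR_cG PR_cE PR_ct PR_cs PR_proj e x x1 y y1)
qed

lemma PRP_VB:
  assumes P: "PR fP" and Wf: "PR fW" and e: "PR fe" and x: "PR fx" and k: "PR fk"
  shows "PRP (\<lambda>xs. VB fP fW (fe xs) (fx xs) (fk xs))"
proof -
  have x1: "PR (\<lambda>xs. fx (tl xs))" by (rule PR_tl[OF x])
  have k1: "PR (\<lambda>xs. fk (tl xs))" by (rule PR_tl[OF k])
  show ?thesis unfolding VB_def
    by (intro PRP_and PRP_ball PRP_imp PRP_iff PRP_or PRP_eq PRP_odd PRP_mem PRP_inG PRP_ValidB[OF P Wf]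
        PR_mult PR_add PR_div2 PR_const PR_cm PR_cG PR_proj e x x1 k k1)
qed

lemma PRP_V'B:
  assumes P: "PR fP" and Wf: "PR fW" and e: "PR fe" and x: "PR fx" and k: "PR fk"
  shows "PRP (\<lambda>xs. V'B fP fW (fe xs) (fk xs) (fx xs))"
proof -
  have x1: "PR (\<lambda>xs. fx (tl xs))" by (rule PR_tl[OF x])
  have k1: "PR (\<lambda>xs. fk (tl xs))" by (rule PR_tl[OF k])
  show ?thesis unfolding V'B_def
    by (intro PRP_and PRP_ball PRP_imp PRP_even PRP_odd PRP_mem PRP_inE PRP_inG PRP_ValidB[OF P Wf]
        PR_div2 PR_cm PR_proj e x x1 k k1)
qed

context
  fixes fP fW :: "nat list \<Rightarrow> nat" and R W :: "nat \<Rightarrow> nat \<Rightarrow> bool" and e :: nat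
  assumes ap: "approx R (RtP fP e) W (RtP fW e)"
begin

lemma Valid_eq: "approx.Valid (RtP fP e) (RtP fW e) x = ValidB fP fW e x"
  unfolding approx.Valid_def[OF ap] ValidB_def RtP_def ..

lemma Sq_eq: "approx.Sq (RtP fP e) (RtP fW e) = SqB fP fW e"
  by (intro ext) (simp only: approx.Sq_def[OF ap] SqB_def Valid_eq)

lemma Vrel_eq: "approx.Vrel (RtP fP e) (RtP fW e) x k = VB fP fW e x k"
proof -
  have "set_decode k = approx.CS x \<longleftrightarrow>
    ((\<forall>j<k. j \<in> set_decode k \<longleftrightarrow> (j = 2 * cm x \<or> (odd j \<and> inG x (j div 2)))) \<and>
    2 * cm x \<in> set_decode k \<and> (\<forall>i<cG x. inG x i \<longrightarrow> 2 * i + 1 \<in> set_decode k))"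
  proof -
    have cs: "j \<in> approx.CS x \<longleftrightarrow> (j = 2 * cm x \<or> (odd j \<and> inG x (j div 2)))" for j
      unfolding approx.CS_def[OF ap] inG_def by (auto elim!: oddE)
    show ?thesis
    proof
      assume "set_decode k = approx.CS x"
      then show "(\<forall>j<k. j \<in> set_decode k \<longleftrightarrow> (j = 2 * cm x \<or> (odd j \<and> inG x (j div 2)))) \<and>
        2 * cm x \<in> set_decode k \<and> (\<forall>i<cG x. inG x i \<longrightarrow> 2 * i + 1 \<in> set_decode k)"
        using cs by auto
    next
      assume A: "(\<forall>j<k. j \<in> set_decode k \<longleftrightarrow> (j = 2 * cm x \<or> (odd j \<and> inG x (j div 2)))) \<and>
        2 * cm x \<in> set_decode k \<and> (\<forall>i<cG x. inG x i \<longrightarrow> 2 * i + 1 \<in> set_decode k)"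
      show "set_decode k = approx.CS x"
      proof (intro equalityI subsetI)
        fix j assume "j \<in> set_decode k"
        then show "j \<in> approx.CS x" using A mem_less cs by blast
      next
        fix j assume "j \<in> approx.CS x"
        then have "j = 2 * cm x \<or> (odd j \<and> inG x (j div 2))" using cs by blast
        then show "j \<in> set_decode k"
        proof
          assume "odd j \<and> inG x (j div 2)"
          then have "j = 2 * (j div 2) + 1" "j div 2 < cG x" using inG_less by auto
          then show ?thesis using A \<open>odd j \<and> inG x (j div 2)\<close> by metis
        qed (use A in blast)
      qed
    qed
  qed
  then show ?thesis unfolding approx.Vrel_def[OF ap] VB_def Valid_eq by blast
qed

lemma V'rel_eq: "approx.V'rel (RtP fP e) (RtP fW e) k x = V'B fP fW e k x"
  unfolding approx.V'rel_def[OF ap] V'B_def Valid_eq using mem_less by blast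

end


theorem corollary5:
  fixes Prec :: "nat \<Rightarrow> nat \<Rightarrow> nat \<Rightarrow> bool"
    and W :: "nat \<Rightarrow> nat \<Rightarrow> nat \<Rightarrow> bool"
  assumes "ce3 Prec"
    and "\<forall>e. transp (Prec e)"
    and "ce3 W"
  shows "\<exists>Sq :: nat \<Rightarrow> nat \<Rightarrow> nat \<Rightarrow> bool. ce3 Sq \<and> (\<forall>e. transp (Sq e))
           \<and> (\<forall>e. computably_homeomorphic (Prec e) (W e) (Sq e))"
proof -
  obtain fP where P: "PR fP"
    and hP: "\<forall>xs. length xs = 3 \<longrightarrow> (Prec (xs ! 0) (xs ! 1) (xs ! 2) \<longleftrightarrow> (\<exists>y. fP (y # xs) \<noteq> 0))"
    using assms(1) unfolding ce3_def ce_on_def by blast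
  obtain fW where Wf: "PR fW"
    and hW: "\<forall>xs. length xs = 3 \<longrightarrow> (W (xs ! 0) (xs ! 1) (xs ! 2) \<longleftrightarrow> (\<exists>y. fW (y # xs) \<noteq> 0))"
    using assms(3) unfolding ce3_def ce_on_def by blast
  have Pe: "Prec e a b \<longleftrightarrow> (\<exists>w. fP [w, e, a, b] \<noteq> 0)" for e a b
    using hP[rule_format, of "[e, a, b]"] by simp
  have We: "W e a b \<longleftrightarrow> (\<exists>w. fW [w, e, a, b] \<noteq> 0)" for e a b
    using hW[rule_format, of "[e, a, b]"] by simp
  have ex_t: "(\<exists>w. f [w, e, a, b] \<noteq> 0) \<longleftrightarrow> (\<exists>t. RtP f e t a b)" for f :: "nat list \<Rightarrow> nat" and e a b
    unfolding RtP_def by (metis lessI)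
  have mono: "RtP f e t a b \<Longrightarrow> t \<le> t' \<Longrightarrow> RtP f e t' a b" for f :: "nat list \<Rightarrow> nat" and e t t' a b
    unfolding RtP_def by (meson less_le_trans)
  have ap: "approx (Prec e) (RtP fP e) (W e) (RtP fW e)" for e
  proof
    show "transp (Prec e)" using assms(2) by blast
    show "Prec e a b \<longleftrightarrow> (\<exists>t. RtP fP e t a b)" for a b using Pe ex_t by blast
    show "W e i n \<longleftrightarrow> (\<exists>t. RtP fW e t i n)" for i n using We ex_t by blast
  qed (use mono in blast)+
  define SQ where "SQ = SqB fP fW"
  have "ce3 SQ"
    unfolding ce3_def ce_on_def
  proof (intro exI conjI allI impI)
    show "PR (\<lambda>zs. if SqB fP fW (proj 1 zs) (proj 2 zs) (proj 3 zs) then 1 else 0)"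
      using PRP_SqB[OF P Wf PR_proj PR_proj PR_proj] unfolding PRP_def .
    fix xs :: "nat list" assume "length xs = 3"
    then obtain a b c where xs: "xs = [a, b, c]"
      by (auto simp: length_Suc_conv numeral_3_eq_3)
    show "SQ (xs ! 0) (xs ! 1) (xs ! 2) \<longleftrightarrow>
      (\<exists>y. (\<lambda>zs. if SqB fP fW (proj 1 zs) (proj 2 zs) (proj 3 zs) then 1 else 0) (y # xs) \<noteq> (0::nat))"
      unfolding xs SQ_def by simp
  qed
  moreover have "transp (SQ e)" for e
    using approx.Sq_transp[OF ap[of e]] unfolding SQ_def Sq_eq[OF ap] .
  moreover have "computably_homeomorphic (Prec e) (W e) (SQ e)" for e
  proof -
    have ce2V: "ce2 (VB fP fW e)"
      unfolding ce2_def ce_on_def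
    proof (intro exI conjI allI impI)
      show "PR (\<lambda>zs. if VB fP fW e (proj 1 zs) (proj 2 zs) then 1 else 0)"
        using PRP_VB[OF P Wf PR_const PR_proj PR_proj] unfolding PRP_def .
      fix xs :: "nat list" assume "length xs = 2"
      then obtain a b where xs: "xs = [a, b]"
        by (auto simp: length_Suc_conv numeral_2_eq_2)
      show "VB fP fW e (xs ! 0) (xs ! 1) \<longleftrightarrow>
        (\<exists>y. (\<lambda>zs. if VB fP fW e (proj 1 zs) (proj 2 zs) then 1 else 0) (y # xs) \<noteq> (0::nat))"
        unfolding xs by simp
    qed
    have ce2V': "ce2 (V'B fP fW e)"
      unfolding ce2_def ce_on_def
    proof (intro exI conjI allI impI)
      show "PR (\<lambda>zs. if V'B fP fW e (proj 1 zs) (proj 2 zs) then 1 else 0)"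
        using PRP_V'B[OF P Wf PR_const PR_proj PR_proj] unfolding PRP_def .
      fix xs :: "nat list" assume "length xs = 2"
      then obtain a b where xs: "xs = [a, b]"
        by (auto simp: length_Suc_conv numeral_2_eq_2)
      show "V'B fP fW e (xs ! 0) (xs ! 1) \<longleftrightarrow>
        (\<exists>y. (\<lambda>zs. if V'B fP fW e (proj 1 zs) (proj 2 zs) then 1 else 0) (y # xs) \<noteq> (0::nat))"
        unfolding xs by simp
    qed
    have SQe: "SQ e = approx.Sq (RtP fP e) (RtP fW e)" unfolding SQ_def Sq_eq[OF ap] ..
    have Vr: "approx.Vrel (RtP fP e) (RtP fW e) = VB fP fW e"
      by (intro ext) (rule Vrel_eq[OF ap])
    have V'r: "approx.V'rel (RtP fP e) (RtP fW e) = V'B fP fW e"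
      by (intro ext) (rule V'rel_eq[OF ap])
    note H = approx.homeo[OF ap[of e]] approx.pre_f[OF ap[of e]] approx.pre_g[OF ap[of e]]
    show ?thesis
      unfolding computably_homeomorphic_def SQe
      using H ce2V ce2V' unfolding Vr V'r by blast
  qed
  ultimately show ?thesis by blast
qed


end
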